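(* Let $(X_n)_{n\ge0}$ be the Kendall random walk with step distribution $\nu\in\mathcal P_s$, $\nu(\{0\})=0$, and let $t>0$ with $\nu(\{t\})=0$ and $G(t)\ne\frac12$. Then for every $n\ge1$ $$\mathbb P\Big(\max_{0\le i\le n}X_i\le t\Big)=A(t)\,2^{-n}+B(t)\frac{G(t)}{1-G(t)}(1-G(t))^2\,n\,G(t)^{n-1}+\big(B(t)+C(t)\big)\frac{G(t)}{1-G(t)}G(t)^{n-1}(1-G(t)),$$ where $$A(t)=1+\frac{H(t)}{(2G(t)-1)^2}-\frac{G(t)}{2G(t)-1},\quad B(t)=\frac{H(t)}{(2G(t)-1)(1-G(t))},\quad C(t)=\frac{G(t)}{2G(t)-1}-\frac{H(t)}{(2G(t)-1)^2}\frac{G(t)}{1-G(t)}.$$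
   Context: Fix $\alpha>0$. $\mathcal P_s$ is the set of symmetric Borel probability measures on $\mathbb R$. For $x\in\mathbb R$, $\widetilde\delta_x=\frac12(\delta_x+\delta_{-x})$. For a probability measure $\lambda=\mathcal L(X)$ and $c>0$, $T_c\lambda=\mathcal L(cX)$, and $T_0\lambda=\delta_0$. $\widetilde\pi_{2\alpha}$ is the symmetric Pareto probability measure with density $\alpha|y|^{-2\alpha-1}\mathbf 1_{\{|y|\ge1\}}$. The Kendall convolution $\vartriangle_\alpha$ on $\mathcal P_s$ is defined by $\widetilde\delta_x\vartriangle_\alpha\widetilde\delta_y=T_M\big(\varrho^\alpha\widetilde\pi_{2\alpha}+(1-\varrho^\alpha)\widetilde\delta_1\big)$ where $M=\max(|x|,|y|)$, $m=\min(|x|,|y|)$, $\varrho=m/M$ (and $\varrho=0$ if $M=0$), extended by $(\nu_1\vartriangle_\alpha\nu_2)(A)=\int\int(\widetilde\delta_x\vartriangle_\alpha\widetilde\delta_y)(A)\,\nu_1(dx)\nu_2(dy)$. For $x\in\mathbb R$ and $\mu\in\mathcal P_s$ we write $\delta_x\vartriangle_\alpha\mu:=\widetilde\delta_x\vartriangle_\alpha\mu$. $\Psi(t)=(1-|t|^\alpha)_+$. For the measure $\nu$: $F(t)=\nu((-\infty,t])$, $G(t)=\int_{\mathbb R}\Psi(x/t)\,\nu(dx)$ for $t\neq0$, and for $t>0$, $H(t)=2F(t)-1-G(t)=t^{-\alpha}\int_{[-t,t]}|x|^\alpha\nu(dx)$. The Kendall random walk with step distribution $\nu$ is the Markov chain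 $(X_n)_{n\ge0}$ with $X_0=0$ and transition kernel $\mathbb P(X_{k+1}\in A\mid X_k=x)=(\delta_x\vartriangle_\alpha\nu)(A)$. *)

theory Defs
  imports "HOL-Probability.Probability"
begin

definition sym_delta :: "real \<Rightarrow> real measure" where
  "sym_delta x = distr (measure_pmf (bernoulli_pmf (1/2))) borel (\<lambda>b. if b then x else - x)"

definition sym_pareto :: "real \<Rightarrow> real measure" where
  "sym_pareto \<alpha> = density lborel
     (\<lambda>y. ennreal (\<alpha> * \<bar>y\<bar> powr (- 2 * \<alpha> - 1) * indicator {y. 1 \<le> \<bar>y\<bar>} y))"

definition scale_meas :: "real \<Rightarrow> real measure \<Rightarrow> real measure" where
  "scale_meas c L = distr L borel (\<lambda>z. c * z)"

text \<open>Kendall convolution of sym_delta x and sym_delta y.\<close>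
definition kendall_pair :: "real \<Rightarrow> real \<Rightarrow> real \<Rightarrow> real measure" where
  "kendall_pair \<alpha> x y =
     (let M = max \<bar>x\<bar> \<bar>y\<bar>; m = min \<bar>x\<bar> \<bar>y\<bar>; \<rho> = (if M = 0 then 0 else m / M)
      in scale_meas M
           (bind (measure_pmf (bernoulli_pmf (\<rho> powr \<alpha>)))
                 (\<lambda>b. if b then sym_pareto \<alpha> else sym_delta 1)))"

definition kendall_kernel :: "real \<Rightarrow> real measure \<Rightarrow> real \<Rightarrow> real measure" where
  "kendall_kernel \<alpha> \<nu> x = bind \<nu> (\<lambda>y. kendall_pair \<alpha> x y)"

text \<open>Joint law of (X_n, max_{0<=i<=n} X_i) for the Kendall random walk started at X_0 = 0.\<close>
fun kendall_walk_max :: "real \<Rightarrow> real measure \<Rightarrow> nat \<Rightarrow> (real \<times> real) measure" where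
  "kendall_walk_max \<alpha> \<nu> 0 = return borel (0, 0)"
| "kendall_walk_max \<alpha> \<nu> (Suc n) =
     bind (kendall_walk_max \<alpha> \<nu> n)
       (\<lambda>(x, m). distr (kendall_kernel \<alpha> \<nu> x) borel (\<lambda>y. (y, max m y)))"

definition Psi :: "real \<Rightarrow> real \<Rightarrow> real" where
  "Psi \<alpha> s = max 0 (1 - \<bar>s\<bar> powr \<alpha>)"

definition cdfF :: "real measure \<Rightarrow> real \<Rightarrow> real" where
  "cdfF \<nu> t = measure \<nu> {..t}"

definition funG :: "real \<Rightarrow> real measure \<Rightarrow> real \<Rightarrow> real" where
  "funG \<alpha> \<nu> t = (\<integral>x. Psi \<alpha> (x / t) \<partial>\<nu>)"

definition funH :: "real \<Rightarrow> real measure \<Rightarrow> real \<Rightarrow> real" where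
  "funH \<alpha> \<nu> t = 2 * cdfF \<nu> t - 1 - funG \<alpha> \<nu> t"

end

theory Submission
  imports Defs
begin



lemma pow_Icc:
  fixes \<beta> c :: real
  assumes b: "\<beta> > 0" and c: "1 \<le> c"
  shows "(\<integral>\<^sup>+z. ennreal (\<beta> * z powr (-\<beta>-1)) * indicator {1..c} z \<partial>lborel) = ennreal (1 - c powr (-\<beta>))"
proof -
  have "(\<integral>\<^sup>+z. ennreal (\<beta> * z powr (-\<beta>-1)) * indicator {1..c} z \<partial>lborel)
      = ennreal ((\<lambda>z. - (z powr (-\<beta>))) c - (\<lambda>z. - (z powr (-\<beta>))) 1)"
  proof (rule nn_integral_FTC_Icc)
    show "(\<lambda>z. \<beta> * z powr (-\<beta>-1)) \<in> borel_measurable borel" by measurable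
    fix x :: real assume x: "x \<in> {1..c}"
    then have "x > 0" by auto
    show "((\<lambda>z. - (z powr (-\<beta>))) has_real_derivative \<beta> * x powr (-\<beta>-1)) (at x)"
    proof -
      have "((\<lambda>z. z powr (-\<beta>)) has_real_derivative (-\<beta>) * x powr (-\<beta>-1)) (at x)"
        using has_real_derivative_powr[OF \<open>x > 0\<close>, of "-\<beta>"] by simp
      from DERIV_minus[OF this] show ?thesis by simp
    qed
    show "0 \<le> \<beta> * x powr (-\<beta>-1)" using b by simp
  qed (use c in auto)
  then show ?thesis by simp
qed

lemma pow_tail:
  fixes \<beta> :: real
  assumes b: "\<beta> > 0"
  shows "(\<integral>\<^sup>+z. ennreal (\<beta> * z powr (-\<beta>-1)) * indicator {1..} z \<partial>lborel) = 1"
proof -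
  have "(\<integral>\<^sup>+z. ennreal (\<beta> * z powr (-\<beta>-1)) * indicator {1..} z \<partial>lborel)
      = ennreal (0 - (\<lambda>z. - (z powr (-\<beta>))) 1)"
  proof (rule nn_integral_FTC_atLeast)
    show "(\<lambda>z. \<beta> * z powr (-\<beta>-1)) \<in> borel_measurable borel" by measurable
    fix x :: real assume x: "1 \<le> x"
    then have "x > 0" by auto
    show "((\<lambda>z. - (z powr (-\<beta>))) has_real_derivative \<beta> * x powr (-\<beta>-1)) (at x)"
    proof -
      have "((\<lambda>z. z powr (-\<beta>)) has_real_derivative (-\<beta>) * x powr (-\<beta>-1)) (at x)"
        using has_real_derivative_powr[OF \<open>x > 0\<close>, of "-\<beta>"] by simp
      from DERIV_minus[OF this] show ?thesis by simp
    qed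
    show "0 \<le> \<beta> * x powr (-\<beta>-1)" using b by simp
  next
    have "((\<lambda>z::real. z powr (-\<beta>)) \<longlongrightarrow> 0) at_top"
      using b by (intro tendsto_neg_powr filterlim_ident) auto
    then show "((\<lambda>z::real. - (z powr (-\<beta>))) \<longlongrightarrow> 0) at_top"
      using tendsto_minus by fastforce
  qed
  then show ?thesis by simp
qed

lemma pareto_nn:
  fixes \<alpha> :: real and g :: "real \<Rightarrow> ennreal"
  assumes a: "\<alpha> > 0" and g[measurable]: "g \<in> borel_measurable borel"
  shows "(\<integral>\<^sup>+z. g z \<partial>sym_pareto \<alpha>) =
    (\<integral>\<^sup>+z. ennreal (\<alpha> * z powr (-2*\<alpha>-1)) * (g z + g (-z)) * indicator {1..} z \<partial>lborel)"
proof -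
  define D where "D z = ennreal (\<alpha> * z powr (-2*\<alpha>-1)) * indicator {1..} z" for z :: real
  have [measurable]: "D \<in> borel_measurable borel" unfolding D_def by measurable
  have "(\<integral>\<^sup>+z. g z \<partial>sym_pareto \<alpha>) =
     (\<integral>\<^sup>+z. ennreal (\<alpha> * \<bar>z\<bar> powr (- 2 * \<alpha> - 1) * indicator {y. 1 \<le> \<bar>y\<bar>} z) * g z \<partial>lborel)"
    unfolding sym_pareto_def by (subst nn_integral_density) auto
  also have "\<dots> = (\<integral>\<^sup>+z. D z * g z + D (-z) * g z \<partial>lborel)"
    by (intro nn_integral_cong) (auto simp: D_def indicator_def)
  also have "\<dots> = (\<integral>\<^sup>+z. D z * g z \<partial>lborel) + (\<integral>\<^sup>+z. D (-z) * g z \<partial>lborel)"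
    by (intro nn_integral_add) auto
  also have "(\<integral>\<^sup>+z. D (-z) * g z \<partial>lborel) = (\<integral>\<^sup>+z. D z * g (-z) \<partial>lborel)"
    using nn_integral_real_affine[of "\<lambda>z. D (-z) * g z" "-1" 0] by simp
  also have "(\<integral>\<^sup>+z. D z * g z \<partial>lborel) + (\<integral>\<^sup>+z. D z * g (-z) \<partial>lborel)
      = (\<integral>\<^sup>+z. D z * g z + D z * g (-z) \<partial>lborel)"
    by (intro nn_integral_add[symmetric]) auto
  also have "\<dots> = (\<integral>\<^sup>+z. ennreal (\<alpha> * z powr (-2*\<alpha>-1)) * (g z + g (-z)) * indicator {1..} z \<partial>lborel)"
    by (intro nn_integral_cong) (simp add: D_def algebra_simps)
  finally show ?thesis .
qed

lemma pareto_total: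
  assumes a: "\<alpha> > 0"
  shows "emeasure (sym_pareto \<alpha>) UNIV = 1"
proof -
  have "emeasure (sym_pareto \<alpha>) UNIV = (\<integral>\<^sup>+z. 1 \<partial>sym_pareto \<alpha>)"
    by (simp add: sym_pareto_def)
  also have "\<dots> = (\<integral>\<^sup>+z. ennreal (\<alpha> * z powr (-2*\<alpha>-1)) * (1 + 1) * indicator {1..} z \<partial>lborel)"
    using a by (intro pareto_nn) auto
  also have "\<dots> = (\<integral>\<^sup>+z. ennreal ((2*\<alpha>) * z powr (-(2*\<alpha>)-1)) * indicator {1..} z \<partial>lborel)"
  proof (intro nn_integral_cong)
    fix z :: real
    have "ennreal (\<alpha> * z powr (-2*\<alpha>-1)) * (1 + 1) = ennreal (\<alpha> * z powr (-2*\<alpha>-1)) * ennreal 2"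
      by (simp add: one_add_one)
    also have "\<dots> = ennreal ((2*\<alpha>) * z powr (-(2*\<alpha>)-1))"
      using a by (subst ennreal_mult[symmetric]) (auto simp: mult_ac)
    finally show "ennreal (\<alpha> * z powr (-2*\<alpha>-1)) * (1 + 1) * indicator {1..} z =
       ennreal ((2*\<alpha>) * z powr (-(2*\<alpha>)-1)) * indicator {1..} z" by simp
  qed
  also have "\<dots> = 1" using a by (intro pow_tail) auto
  finally show ?thesis .
qed

lemma prob_space_pareto: "\<alpha> > 0 \<Longrightarrow> prob_space (sym_pareto \<alpha>)"
proof -
  assume a: "\<alpha> > 0"
  have "space (sym_pareto \<alpha>) = UNIV" by (simp add: sym_pareto_def)
  then show ?thesis by (intro prob_spaceI) (simp add: pareto_total[OF a])
qed

lemma sets_pareto[simp, measurable_cong]: "sets (sym_pareto \<alpha>) = sets borel"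
  by (simp add: sym_pareto_def)

lemma prob_space_sym_delta: "prob_space (sym_delta c)"
  unfolding sym_delta_def by (intro prob_space.prob_space_distr) (auto simp: prob_space_measure_pmf)

lemma sets_sym_delta[simp, measurable_cong]: "sets (sym_delta c) = sets borel"
  by (simp add: sym_delta_def)

lemma sym_delta_nn:
  assumes [measurable]: "g \<in> borel_measurable borel"
  shows "(\<integral>\<^sup>+z. g z \<partial>sym_delta c) = ennreal (1/2) * (g c + g (-c))"
  unfolding sym_delta_def
  by (subst nn_integral_distr) (auto simp: algebra_simps)

definition kM :: "real \<Rightarrow> real \<Rightarrow> real" where
  "kM x y = max \<bar>x\<bar> \<bar>y\<bar>"
definition kp :: "real \<Rightarrow> real \<Rightarrow> real \<Rightarrow> real" where
  "kp \<alpha> x y = (if kM x y = 0 then 0 else min \<bar>x\<bar> \<bar>y\<bar> / kM x y) powr \<alpha>"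

lemma kp_bounds: "0 \<le> kp \<alpha> x y" "\<alpha> > 0 \<Longrightarrow> kp \<alpha> x y \<le> 1"
proof -
  show "0 \<le> kp \<alpha> x y" unfolding kp_def by simp
  assume a: "\<alpha> > 0"
  show "kp \<alpha> x y \<le> 1"
  proof (cases "kM x y = 0")
    case True then show ?thesis unfolding kp_def by simp
  next
    case False
    then have M: "kM x y > 0" unfolding kM_def by auto
    have q: "0 \<le> min \<bar>x\<bar> \<bar>y\<bar> / kM x y" "min \<bar>x\<bar> \<bar>y\<bar> / kM x y \<le> 1"
      using M by (auto simp: divide_le_eq_1 kM_def)
    have "(min \<bar>x\<bar> \<bar>y\<bar> / kM x y) powr \<alpha> \<le> 1 powr \<alpha>"
      using powr_mono2[OF _ q] a by simp
    then show ?thesis using False unfolding kp_def by simp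
  qed
qed

definition mixK where
  "mixK \<alpha> p = bind (measure_pmf (bernoulli_pmf p)) (\<lambda>b. if b then sym_pareto \<alpha> else sym_delta 1)"

lemma mixK_kernel:
  assumes "\<alpha> > 0"
  shows "(\<lambda>b. if b then sym_pareto \<alpha> else sym_delta 1) \<in> measurable (measure_pmf (bernoulli_pmf p)) (subprob_algebra borel)"
  apply (simp only: measurable_pmf_measure1)
  using assms prob_space_pareto prob_space_sym_delta
  by (auto simp: space_subprob_algebra prob_space_imp_subprob_space)

lemma sets_mixK[simp, measurable_cong]: "sets (mixK \<alpha> p) = sets borel"
  unfolding mixK_def by (subst sets_bind) auto

lemma kendall_pair_mix: "kendall_pair \<alpha> x y = distr (mixK \<alpha> (kp \<alpha> x y)) borel (\<lambda>z. kM x y * z)"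
  unfolding kendall_pair_def Let_def scale_meas_def mixK_def kp_def kM_def ..

lemma mixK_nn:
  assumes a: "\<alpha> > 0" and p: "0 \<le> p" "p \<le> 1" and g[measurable]: "g \<in> borel_measurable borel"
  shows "(\<integral>\<^sup>+z. g z \<partial>mixK \<alpha> p) = (\<integral>\<^sup>+z. g z \<partial>sym_pareto \<alpha>) * ennreal p + ennreal (1/2) * (g 1 + g (-1)) * ennreal (1 - p)"
  unfolding mixK_def
  by (subst nn_integral_bind[OF g mixK_kernel[OF a]]) (simp add: p sym_delta_nn)

lemma pair_nn:
  assumes a: "\<alpha> > 0" and g[measurable]: "g \<in> borel_measurable borel"
  shows "(\<integral>\<^sup>+z. g z \<partial>kendall_pair \<alpha> x y) =
    (\<integral>\<^sup>+z. g (kM x y * z) \<partial>sym_pareto \<alpha>) * ennreal (kp \<alpha> x y)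
    + ennreal (1/2) * (g (kM x y) + g (- kM x y)) * ennreal (1 - kp \<alpha> x y)"
  unfolding kendall_pair_mix
  by (subst nn_integral_distr) (auto simp: mixK_nn a kp_bounds)

lemma prob_space_mixK: "\<alpha> > 0 \<Longrightarrow> prob_space (mixK \<alpha> p)"
  unfolding mixK_def
  by (rule prob_space.prob_space_bind[OF prob_space_measure_pmf _ mixK_kernel])
     (auto simp: prob_space_pareto prob_space_sym_delta)

lemma prob_space_pair: "\<alpha> > 0 \<Longrightarrow> prob_space (kendall_pair \<alpha> x y)"
  unfolding kendall_pair_mix
  by (intro prob_space.prob_space_distr prob_space_mixK) auto

lemma sets_pair[simp, measurable_cong]: "sets (kendall_pair \<alpha> x y) = sets borel"
  unfolding kendall_pair_mix by simp




lemma half_split: "0 \<le> (a::real) \<Longrightarrow> ennreal a = ennreal (1/2) * ennreal (2 * a)"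
  by (subst ennreal_mult'[symmetric]) auto

lemma PT:
  assumes a: "\<alpha> > 0"
  shows "(\<integral>\<^sup>+z. ennreal (\<alpha> * z powr (-2*\<alpha>-1)) * indicator {1..} z \<partial>lborel) = ennreal (1/2)"
proof -
  have "(\<integral>\<^sup>+z. ennreal (\<alpha> * z powr (-2*\<alpha>-1)) * indicator {1..} z \<partial>lborel)
     = (\<integral>\<^sup>+z. ennreal (1/2) * (ennreal ((2*\<alpha>) * z powr (-(2*\<alpha>)-1)) * indicator {1..} z) \<partial>lborel)"
    using a by (intro nn_integral_cong) (subst half_split, simp, simp add: mult.assoc)
  also have "\<dots> = ennreal (1/2) * (\<integral>\<^sup>+z. ennreal ((2*\<alpha>) * z powr (-(2*\<alpha>)-1)) * indicator {1..} z \<partial>lborel)"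
    by (intro nn_integral_cmult) auto
  also have "\<dots> = ennreal (1/2)" using a by (subst pow_tail) auto
  finally show ?thesis .
qed

lemma PB:
  assumes a: "\<alpha> > 0" and c: "0 < c"
  shows "(\<integral>\<^sup>+z. ennreal (\<alpha> * z powr (-2*\<alpha>-1)) * ennreal (indicator {..c} z) * indicator {1..} z \<partial>lborel)
     = ennreal (if 1 \<le> c then (1 - c powr (-2*\<alpha>)) / 2 else 0)"
proof (cases "1 \<le> c")
  case True
  have "(\<integral>\<^sup>+z. ennreal (\<alpha> * z powr (-2*\<alpha>-1)) * ennreal (indicator {..c} z) * indicator {1..} z \<partial>lborel)
     = (\<integral>\<^sup>+z. ennreal (1/2) * (ennreal ((2*\<alpha>) * z powr (-(2*\<alpha>)-1)) * indicator {1..c} z) \<partial>lborel)"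
    using a by (intro nn_integral_cong) (subst half_split, simp, auto simp add: indicator_def mult.assoc)
  also have "\<dots> = ennreal (1/2) * (\<integral>\<^sup>+z. ennreal ((2*\<alpha>) * z powr (-(2*\<alpha>)-1)) * indicator {1..c} z \<partial>lborel)"
    by (intro nn_integral_cmult) auto
  also have "\<dots> = ennreal (1/2) * ennreal (1 - c powr (-(2*\<alpha>)))" using a True by (subst pow_Icc) auto
  also have "\<dots> = ennreal ((1 - c powr (-2*\<alpha>)) / 2)"
    by (subst ennreal_mult'[symmetric]) auto
  finally show ?thesis using True by simp
next
  case False
  then show ?thesis
    by (subst nn_integral_0_iff_AE[THEN iffD2]) (auto simp: indicator_def)
qed

lemma PC:
  assumes a: "\<alpha> > 0" and c: "0 < c"
  shows "(\<integral>\<^sup>+z. ennreal (\<alpha> * z powr (-2*\<alpha>-1)) * ennreal (indicator {..c} z * (z / c) powr \<alpha>) * indicator {1..} z \<partial>lborel)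
     = ennreal (if 1 \<le> c then c powr (-\<alpha>) * (1 - c powr (-\<alpha>)) else 0)"
proof (cases "1 \<le> c")
  case True
  have "(\<integral>\<^sup>+z. ennreal (\<alpha> * z powr (-2*\<alpha>-1)) * ennreal (indicator {..c} z * (z / c) powr \<alpha>) * indicator {1..} z \<partial>lborel)
     = (\<integral>\<^sup>+z. ennreal (c powr (-\<alpha>)) * (ennreal (\<alpha> * z powr (-\<alpha>-1)) * indicator {1..c} z) \<partial>lborel)"
  proof (intro nn_integral_cong)
    fix z :: real
    show "ennreal (\<alpha> * z powr (-2*\<alpha>-1)) * ennreal (indicator {..c} z * (z / c) powr \<alpha>) * indicator {1..} z
      = ennreal (c powr (-\<alpha>)) * (ennreal (\<alpha> * z powr (-\<alpha>-1)) * indicator {1..c} z)"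
    proof (cases "1 \<le> z \<and> z \<le> c")
      case True
      then have z: "z > 0" by auto
      have "\<alpha> * z powr (-2*\<alpha>-1) * ((z / c) powr \<alpha>) = c powr (-\<alpha>) * (\<alpha> * z powr (-\<alpha>-1))"
        using z c by (simp add: powr_divide powr_minus_divide powr_add[symmetric] field_simps)
      then show ?thesis using True a
        by (simp add: indicator_def ennreal_mult'[symmetric])
    qed (auto simp: indicator_def)
  qed
  also have "\<dots> = ennreal (c powr (-\<alpha>)) * (\<integral>\<^sup>+z. ennreal (\<alpha> * z powr (-\<alpha>-1)) * indicator {1..c} z \<partial>lborel)"
    by (intro nn_integral_cmult) auto
  also have "\<dots> = ennreal (c powr (-\<alpha>)) * ennreal (1 - c powr (-\<alpha>))" using a True by (subst pow_Icc) auto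
  also have "\<dots> = ennreal (c powr (-\<alpha>) * (1 - c powr (-\<alpha>)))"
    by (subst ennreal_mult'[symmetric]) auto
  finally show ?thesis using True by simp
next
  case False
  then show ?thesis
    by (subst nn_integral_0_iff_AE[THEN iffD2]) (auto simp: indicator_def)
qed


lemma comb:
  assumes "0 \<le> P" "0 \<le> k" "k \<le> 1" "0 \<le> u" "0 \<le> v"
  shows "ennreal P * ennreal k + ennreal (1/2) * (ennreal u + ennreal v) * ennreal (1-k)
       = ennreal (P*k + (u+v)/2*(1-k))"
proof -
  have e1: "ennreal u + ennreal v = ennreal (u+v)" using assms by (intro ennreal_plus[symmetric])
  have e2: "ennreal (1/2) * ennreal (u+v) = ennreal (1/2*(u+v))" using assms by (intro ennreal_mult[symmetric]) auto
  have e3: "ennreal (1/2*(u+v)) * ennreal (1-k) = ennreal (1/2*(u+v)*(1-k))" using assms by (intro ennreal_mult[symmetric]) auto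
  have e4: "ennreal P * ennreal k = ennreal (P*k)" using assms by (intro ennreal_mult[symmetric]) auto
  have e5: "ennreal (P*k) + ennreal (1/2*(u+v)*(1-k)) = ennreal (P*k + 1/2*(u+v)*(1-k))"
    using assms by (intro ennreal_plus[symmetric]) auto
  show ?thesis unfolding e1 e2 e3 e4 e5 by simp
qed

lemma pareto_scaled:
  assumes a: "\<alpha> > 0" and g[measurable]: "g \<in> borel_measurable borel"
    and h: "\<And>z. 1 \<le> z \<Longrightarrow> g (M*z) + g (-(M*z)) = ennreal (h z)"
  shows "(\<integral>\<^sup>+z. g (M*z) \<partial>sym_pareto \<alpha>) =
    (\<integral>\<^sup>+z. ennreal (\<alpha> * z powr (-2*\<alpha>-1)) * ennreal (h z) * indicator {1..} z \<partial>lborel)"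
proof -
  have "(\<integral>\<^sup>+z. g (M*z) \<partial>sym_pareto \<alpha>) =
    (\<integral>\<^sup>+z. ennreal (\<alpha> * z powr (-2*\<alpha>-1)) * (g (M*z) + g (M*(-z))) * indicator {1..} z \<partial>lborel)"
    using a by (intro pareto_nn) auto
  also have "\<dots> = (\<integral>\<^sup>+z. ennreal (\<alpha> * z powr (-2*\<alpha>-1)) * ennreal (h z) * indicator {1..} z \<partial>lborel)"
    by (intro nn_integral_cong) (auto simp: indicator_def h)
  finally show ?thesis .
qed

definition phi :: "real \<Rightarrow> real \<Rightarrow> real \<Rightarrow> real" where
  "phi \<alpha> t u = (\<bar>u\<bar> / t) powr \<alpha>"
definition It :: "real \<Rightarrow> real \<Rightarrow> real" where
  "It t u = indicator {-t..t} u"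

lemma phi_nonneg: "0 \<le> phi \<alpha> t u" by (simp add: phi_def)
lemma It_nonneg: "0 \<le> It t u" by (simp add: It_def)

lemma kM0: "kM x y = 0 \<Longrightarrow> x = 0 \<and> y = 0"
  unfolding kM_def by (auto simp: max_def split: if_splits)
lemma kM_pos: "kM x y \<noteq> 0 \<Longrightarrow> kM x y > 0"
  unfolding kM_def by auto

lemma prod_phi: "(min \<bar>x\<bar> \<bar>y\<bar> / t) powr \<alpha> * (max \<bar>x\<bar> \<bar>y\<bar> / t) powr \<alpha> = phi \<alpha> t x * phi \<alpha> t y"
  unfolding phi_def by (cases "\<bar>x\<bar> \<le> \<bar>y\<bar>") (auto simp: min_def max_def)
lemma sum_phi: "(min \<bar>x\<bar> \<bar>y\<bar> / t) powr \<alpha> + (max \<bar>x\<bar> \<bar>y\<bar> / t) powr \<alpha> = phi \<alpha> t x + phi \<alpha> t y"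
  unfolding phi_def by (cases "\<bar>x\<bar> \<le> \<bar>y\<bar>") (auto simp: min_def max_def)

lemma kp_mul:
  assumes "kM x y > 0" "t > 0"
  shows "kp \<alpha> x y * (kM x y / t) powr \<alpha> = (min \<bar>x\<bar> \<bar>y\<bar> / t) powr \<alpha>"
proof -
  have "kp \<alpha> x y * (kM x y / t) powr \<alpha> = (min \<bar>x\<bar> \<bar>y\<bar> / kM x y * (kM x y / t)) powr \<alpha>"
    using assms unfolding kp_def by (simp add: powr_mult[symmetric] kM_def)
  also have "min \<bar>x\<bar> \<bar>y\<bar> / kM x y * (kM x y / t) = min \<bar>x\<bar> \<bar>y\<bar> / t"
    using assms by simp
  finally show ?thesis .
qed

lemma c_pow:
  fixes M t \<alpha> :: real
  assumes "M > 0" "t > 0"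
  shows "(t/M) powr (-\<alpha>) = (M/t) powr \<alpha>"
    "(t/M) powr (-2*\<alpha>) = ((M/t) powr \<alpha>) * ((M/t) powr \<alpha>)"
proof -
  show 1: "(t/M) powr (-\<alpha>) = (M/t) powr \<alpha>"
    by (simp add: powr_minus_divide powr_divide)
  have "(t/M) powr (-2*\<alpha>) = (t/M) powr (-\<alpha>) * (t/M) powr (-\<alpha>)"
    by (simp add: powr_add[symmetric])
  then show "(t/M) powr (-2*\<alpha>) = ((M/t) powr \<alpha>) * ((M/t) powr \<alpha>)" using 1 by simp
qed
lemma It_eq: "It t u = (if \<bar>u\<bar> \<le> t then 1 else 0)"
  by (auto simp: It_def indicator_def abs_le_iff)

lemma kM_le: "kM x y \<le> t \<Longrightarrow> It t x * It t y = 1"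
  "\<not> kM x y \<le> t \<Longrightarrow> It t x * It t y = 0"
  unfolding kM_def It_eq by auto


lemma It_meas[measurable]: "It t \<in> borel_measurable borel"
  unfolding It_def by measurable
lemma phi_meas[measurable]: "phi \<alpha> t \<in> borel_measurable borel"
  unfolding phi_def by measurable

lemma It_scaled:
  assumes M: "M > 0" and z: "1 \<le> z"
  shows "It t (M*z) = indicator {..t/M} z" "It t (-(M*z)) = indicator {..t/M} z"
  using M z by (auto simp: It_eq indicator_def field_simps abs_mult)

lemma phi_scaled:
  assumes M: "M > 0" and z: "1 \<le> z" and t: "t > 0"
  shows "phi \<alpha> t (M*z) = (z / (t/M)) powr \<alpha>" "phi \<alpha> t (-(M*z)) = (z / (t/M)) powr \<alpha>"
  using M z t by (auto simp: phi_def abs_mult mult.commute)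

lemma phi0: "\<alpha> > 0 \<Longrightarrow> phi \<alpha> t 0 = 0" by (simp add: phi_def)

lemma kM_nonneg: "0 \<le> kM x y" by (simp add: kM_def)
lemma kM_abs: "\<bar>kM x y\<bar> = kM x y" by (simp add: kM_def)

lemma V1:
  assumes a: "\<alpha> > 0" and t: "t > 0"
  shows "(\<integral>\<^sup>+z. ennreal (It t z) \<partial>kendall_pair \<alpha> x y) = ennreal (It t x * It t y * (1 - phi \<alpha> t x * phi \<alpha> t y))"
proof -
  have g[measurable]: "(\<lambda>z. ennreal (It t z)) \<in> borel_measurable borel"
    by (intro measurable_compose[OF It_meas] measurable_ennreal)
  note pn = pair_nn[OF a g, of x y]
  show ?thesis
  proof (cases "kM x y = 0")
    case True
    then have xy: "x = 0" "y = 0" using kM0 by blast+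
    have kp: "kp \<alpha> x y = 0" using True by (simp add: kp_def)
    have "(\<integral>\<^sup>+z. ennreal (It t z) \<partial>kendall_pair \<alpha> x y) =
      ennreal 0 * ennreal 0 + ennreal (1/2) * (ennreal 1 + ennreal 1) * ennreal (1 - 0)"
      using t unfolding pn kp True by (simp add: It_eq)
    also have "\<dots> = ennreal 1" by (subst comb) auto
    finally show ?thesis using xy t a by (simp add: It_eq phi0)
  next
    case False
    define M where "M = kM x y"
    have M: "M > 0" using False kM_pos M_def by auto
    define c where "c = t / M"
    have c: "c > 0" using M t by (simp add: c_def)
    define PB where "PB = (if 1 \<le> c then (1 - c powr (-2*\<alpha>)) / 2 else 0)"
    have PB0: "0 \<le> PB" unfolding PB_def using c a
      by (auto simp: powr_minus_divide divide_le_eq_1 intro!: ge_one_powr_ge_zero)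
    have "(\<integral>\<^sup>+z. ennreal (It t (M*z)) \<partial>sym_pareto \<alpha>) =
      (\<integral>\<^sup>+z. ennreal (\<alpha> * z powr (-2*\<alpha>-1)) * ennreal (2 * indicator {..c} z) * indicator {1..} z \<partial>lborel)"
      using It_scaled[OF M] a
      by (intro pareto_scaled) (auto simp: c_def ennreal_plus[symmetric] indicator_def)
    also have "\<dots> = (\<integral>\<^sup>+z. ennreal 2 * (ennreal (\<alpha> * z powr (-2*\<alpha>-1)) * ennreal (indicator {..c} z) * indicator {1..} z) \<partial>lborel)"
      by (intro nn_integral_cong) (auto simp: indicator_def mult_ac)
    also have "\<dots> = ennreal 2 * ennreal PB"
      using a c Submission.PB[OF a c] by (subst nn_integral_cmult) (auto simp: PB_def)
    also have "\<dots> = ennreal (2 * PB)" using PB0 by (simp add: ennreal_mult)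
    finally have Pi: "(\<integral>\<^sup>+z. ennreal (It t (M*z)) \<partial>sym_pareto \<alpha>) = ennreal (2 * PB)" .
    have "(\<integral>\<^sup>+z. ennreal (It t z) \<partial>kendall_pair \<alpha> x y) =
      ennreal (2 * PB * kp \<alpha> x y + (It t M + It t (-M)) / 2 * (1 - kp \<alpha> x y))"
      unfolding pn M_def[symmetric] Pi
      using PB0 kp_bounds[of \<alpha> x y] a by (subst comb) (auto simp: It_nonneg)
    also have "2 * PB * kp \<alpha> x y + (It t M + It t (-M)) / 2 * (1 - kp \<alpha> x y)
        = It t x * It t y * (1 - phi \<alpha> t x * phi \<alpha> t y)"
    proof (cases "M \<le> t")
      case True
      then have c1: "1 \<le> c" using M by (simp add: c_def)
      have "kp \<alpha> x y * ((M/t) powr \<alpha> * (M/t) powr \<alpha>) = phi \<alpha> t x * phi \<alpha> t y"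
        using kp_mul[of x y t \<alpha>] prod_phi[of x y t \<alpha>] M t unfolding M_def
        by (simp add: kM_def mult.assoc[symmetric])
      moreover have "c powr (-2*\<alpha>) = (M/t) powr \<alpha> * (M/t) powr \<alpha>"
        using c_pow(2)[OF M t] by (simp add: c_def)
      ultimately show ?thesis using True c1 kM_le(1)[of x y t] M
        by (simp add: PB_def It_eq M_def kM_abs field_simps)
    next
      case False
      then have c1: "\<not> 1 \<le> c" using M by (simp add: c_def)
      show ?thesis using False c1 kM_le(2)[of x y t] M
        by (simp add: PB_def It_eq M_def kM_abs)
    qed
    finally show ?thesis .
  qed
qed


lemma V2:
  assumes a: "\<alpha> > 0" and t: "t > 0"
  shows "(\<integral>\<^sup>+z. ennreal (It t z * phi \<alpha> t z) \<partial>kendall_pair \<alpha> x y)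
     = ennreal (It t x * It t y * (phi \<alpha> t x + phi \<alpha> t y - 2 * phi \<alpha> t x * phi \<alpha> t y))"
proof -
  have g[measurable]: "(\<lambda>z. ennreal (It t z * phi \<alpha> t z)) \<in> borel_measurable borel"
    by (intro measurable_compose[OF _ measurable_ennreal] borel_measurable_times It_meas phi_meas)
  note pn = pair_nn[OF a g, of x y]
  show ?thesis
  proof (cases "kM x y = 0")
    case True
    then have xy: "x = 0" "y = 0" using kM0 by blast+
    have kp: "kp \<alpha> x y = 0" using True by (simp add: kp_def)
    have "(\<integral>\<^sup>+z. ennreal (It t z * phi \<alpha> t z) \<partial>kendall_pair \<alpha> x y) =
      ennreal 0 * ennreal 0 + ennreal (1/2) * (ennreal 0 + ennreal 0) * ennreal (1 - 0)"
      using t a unfolding pn kp True by (simp add: phi0)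
    also have "\<dots> = ennreal 0" by (subst comb) auto
    finally show ?thesis using xy t a by (simp add: It_eq phi0)
  next
    case False
    define M where "M = kM x y"
    have M: "M > 0" using False kM_pos M_def by auto
    define c where "c = t / M"
    have c: "c > 0" using M t by (simp add: c_def)
    define PC where "PC = (if 1 \<le> c then c powr (-\<alpha>) * (1 - c powr (-\<alpha>)) else 0)"
    have PC0: "0 \<le> PC"
    proof (cases "1 \<le> c")
      case True
      have "1 \<le> c powr \<alpha>" using True a by (intro ge_one_powr_ge_zero) auto
      moreover have "0 < c powr \<alpha>" using c by simp
      ultimately have "c powr (-\<alpha>) \<le> 1" "0 \<le> c powr (-\<alpha>)" by (auto simp: powr_minus_divide field_simps)
      then show ?thesis unfolding PC_def by simp
    qed (simp add: PC_def)
    have "(\<integral>\<^sup>+z. ennreal (It t (M*z) * phi \<alpha> t (M*z)) \<partial>sym_pareto \<alpha>) =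
      (\<integral>\<^sup>+z. ennreal (\<alpha> * z powr (-2*\<alpha>-1)) * ennreal (2 * (indicator {..c} z * (z/c) powr \<alpha>)) * indicator {1..} z \<partial>lborel)"
      using It_scaled[OF M] phi_scaled[OF M _ t] a
      by (intro pareto_scaled) (auto simp: c_def ennreal_plus[symmetric] indicator_def)
    also have "\<dots> = (\<integral>\<^sup>+z. ennreal 2 * (ennreal (\<alpha> * z powr (-2*\<alpha>-1)) * ennreal (indicator {..c} z * (z/c) powr \<alpha>) * indicator {1..} z) \<partial>lborel)"
      by (intro nn_integral_cong) (auto simp: indicator_def mult_ac ennreal_mult')
    also have "\<dots> = ennreal 2 * ennreal PC"
      using a c Submission.PC[OF a c] by (subst nn_integral_cmult) (auto simp: PC_def)
    also have "\<dots> = ennreal (2 * PC)" using PC0 by (simp add: ennreal_mult)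
    finally have Pi: "(\<integral>\<^sup>+z. ennreal (It t (M*z) * phi \<alpha> t (M*z)) \<partial>sym_pareto \<alpha>) = ennreal (2 * PC)" .
    have "(\<integral>\<^sup>+z. ennreal (It t z * phi \<alpha> t z) \<partial>kendall_pair \<alpha> x y) =
      ennreal (2 * PC * kp \<alpha> x y + (It t M * phi \<alpha> t M + It t (-M) * phi \<alpha> t (-M)) / 2 * (1 - kp \<alpha> x y))"
      unfolding pn M_def[symmetric] Pi
      using PC0 kp_bounds[of \<alpha> x y] a by (subst comb) (auto simp: It_nonneg phi_nonneg)
    also have "2 * PC * kp \<alpha> x y + (It t M * phi \<alpha> t M + It t (-M) * phi \<alpha> t (-M)) / 2 * (1 - kp \<alpha> x y)
        = It t x * It t y * (phi \<alpha> t x + phi \<alpha> t y - 2 * phi \<alpha> t x * phi \<alpha> t y)"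
    proof (cases "M \<le> t")
      case True
      then have c1: "1 \<le> c" using M by (simp add: c_def)
      define Mt where "Mt = (M/t) powr \<alpha>"
      have phiM: "phi \<alpha> t M = Mt" "phi \<alpha> t (-M) = Mt" using M by (auto simp: phi_def Mt_def)
      have km: "kp \<alpha> x y * Mt = (min \<bar>x\<bar> \<bar>y\<bar> / t) powr \<alpha>"
        using kp_mul[of x y t \<alpha>] M t unfolding M_def Mt_def by simp
      have pp: "(min \<bar>x\<bar> \<bar>y\<bar> / t) powr \<alpha> * Mt = phi \<alpha> t x * phi \<alpha> t y"
        "(min \<bar>x\<bar> \<bar>y\<bar> / t) powr \<alpha> + Mt = phi \<alpha> t x + phi \<alpha> t y"
        using prod_phi[of x y t \<alpha>] sum_phi[of x y t \<alpha>] unfolding Mt_def M_def kM_def by auto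
      have cc: "c powr (-\<alpha>) = Mt"
        using c_pow(1)[OF M t] by (simp add: c_def Mt_def)
      have "2 * PC * kp \<alpha> x y + (It t M * phi \<alpha> t M + It t (-M) * phi \<alpha> t (-M)) / 2 * (1 - kp \<alpha> x y)
          = (kp \<alpha> x y * Mt) + Mt - 2 * (kp \<alpha> x y * Mt) * Mt"
        using True c1 M by (simp add: PC_def cc phiM It_eq algebra_simps)
      also have "\<dots> = phi \<alpha> t x + phi \<alpha> t y - 2 * phi \<alpha> t x * phi \<alpha> t y"
        unfolding km using pp by (simp add: mult.assoc)
      finally show ?thesis using kM_le(1)[of x y t] True unfolding M_def by simp
    next
      case False
      then have c1: "\<not> 1 \<le> c" using M by (simp add: c_def)
      show ?thesis using False c1 kM_le(2)[of x y t] M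
        by (simp add: PC_def It_eq M_def kM_abs)
    qed
    finally show ?thesis .
  qed
qed

lemma V3:
  assumes a: "\<alpha> > 0" and t: "t > 0"
  shows "(\<integral>\<^sup>+z. ennreal (indicator {..t} z) \<partial>kendall_pair \<alpha> x y)
     = ennreal ((1 + It t x * It t y * (1 - phi \<alpha> t x * phi \<alpha> t y)) / 2)"
proof -
  have g[measurable]: "(\<lambda>z. ennreal (indicator {..t} z)) \<in> borel_measurable borel"
    by (intro measurable_compose[OF _ measurable_ennreal] borel_measurable_indicator) simp
  note pn = pair_nn[OF a g, of x y]
  show ?thesis
  proof (cases "kM x y = 0")
    case True
    then have xy: "x = 0" "y = 0" using kM0 by blast+
    have kp: "kp \<alpha> x y = 0" using True by (simp add: kp_def)
    have "(\<integral>\<^sup>+z. ennreal (indicator {..t} z) \<partial>kendall_pair \<alpha> x y) =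
      ennreal 0 * ennreal 0 + ennreal (1/2) * (ennreal 1 + ennreal 1) * ennreal (1 - 0)"
      using t a unfolding pn kp True by simp
    also have "\<dots> = ennreal 1" by (subst comb) auto
    finally show ?thesis using xy t a by (simp add: It_eq phi0)
  next
    case False
    define M where "M = kM x y"
    have M: "M > 0" using False kM_pos M_def by auto
    define c where "c = t / M"
    have c: "c > 0" using M t by (simp add: c_def)
    define PB where "PB = (if 1 \<le> c then (1 - c powr (-2*\<alpha>)) / 2 else 0)"
    have PB0: "0 \<le> PB" unfolding PB_def using c a
      by (auto simp: powr_minus_divide divide_le_eq_1 intro!: ge_one_powr_ge_zero)
    have "(\<integral>\<^sup>+z. ennreal (indicator {..t} (M*z)) \<partial>sym_pareto \<alpha>) =
      (\<integral>\<^sup>+z. ennreal (\<alpha> * z powr (-2*\<alpha>-1)) * ennreal (indicator {..c} z + 1) * indicator {1..} z \<partial>lborel)"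
    proof (rule pareto_scaled[OF a])
      fix z :: real assume z: "1 \<le> z"
      have i1: "indicator {..t} (-(M*z)) = (1::real)" using M z t
        by (auto simp: indicator_def) (smt (verit) mult_pos_pos)
      have i2: "indicator {..t} (M*z) = (indicator {..c} z :: real)" using M
        by (auto simp: indicator_def c_def pos_le_divide_eq mult.commute)
      show "ennreal (indicator {..t} (M*z)) + ennreal (indicator {..t} (-(M*z))) = ennreal (indicator {..c} z + 1)"
        unfolding i1 i2 by (subst ennreal_plus[symmetric]) auto
    qed simp
    also have "\<dots> = (\<integral>\<^sup>+z. ennreal (\<alpha> * z powr (-2*\<alpha>-1)) * ennreal (indicator {..c} z) * indicator {1..} z
         + ennreal (\<alpha> * z powr (-2*\<alpha>-1)) * indicator {1..} z \<partial>lborel)"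
      by (intro nn_integral_cong) (auto simp: indicator_def mult_2_right)
    also have "\<dots> = (\<integral>\<^sup>+z. ennreal (\<alpha> * z powr (-2*\<alpha>-1)) * ennreal (indicator {..c} z) * indicator {1..} z \<partial>lborel)
         + (\<integral>\<^sup>+z. ennreal (\<alpha> * z powr (-2*\<alpha>-1)) * indicator {1..} z \<partial>lborel)"
      by (intro nn_integral_add) auto
    also have "\<dots> = ennreal PB + ennreal (1/2)"
      using a c Submission.PB[OF a c] Submission.PT[OF a] by (simp add: PB_def)
    also have "\<dots> = ennreal (PB + 1/2)" using PB0 by (simp add: ennreal_plus)
    finally have Pi: "(\<integral>\<^sup>+z. ennreal (indicator {..t} (M*z)) \<partial>sym_pareto \<alpha>) = ennreal (PB + 1/2)" .
    have "(\<integral>\<^sup>+z. ennreal (indicator {..t} z) \<partial>kendall_pair \<alpha> x y) =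
      ennreal ((PB + 1/2) * kp \<alpha> x y + (indicator {..t} M + indicator {..t} (-M)) / 2 * (1 - kp \<alpha> x y))"
      unfolding pn M_def[symmetric] Pi
      using PB0 kp_bounds[of \<alpha> x y] a by (subst comb) auto
    also have "(PB + 1/2) * kp \<alpha> x y + (indicator {..t} M + indicator {..t} (-M)) / 2 * (1 - kp \<alpha> x y)
        = (1 + It t x * It t y * (1 - phi \<alpha> t x * phi \<alpha> t y)) / 2"
    proof (cases "M \<le> t")
      case True
      then have c1: "1 \<le> c" using M by (simp add: c_def)
      have "kp \<alpha> x y * ((M/t) powr \<alpha> * (M/t) powr \<alpha>) = phi \<alpha> t x * phi \<alpha> t y"
        using kp_mul[of x y t \<alpha>] prod_phi[of x y t \<alpha>] M t unfolding M_def
        by (simp add: kM_def mult.assoc[symmetric])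
      moreover have "c powr (-2*\<alpha>) = (M/t) powr \<alpha> * (M/t) powr \<alpha>"
        using c_pow(2)[OF M t] by (simp add: c_def)
      moreover have "indicator {..t} M = (1::real)" "indicator {..t} (-M) = (1::real)"
        using True M t by auto
      moreover have "It t x * It t y = 1" using kM_le(1)[of x y t] True M_def by simp
      ultimately show ?thesis using True c1 M
        by (simp add: PB_def field_simps)
    next
      case False
      then have c1: "\<not> 1 \<le> c" using M by (simp add: c_def)
      have "indicator {..t} M = (0::real)" "indicator {..t} (-M) = (1::real)"
        using False M t by auto
      moreover have "It t x * It t y = 0" using kM_le(2)[of x y t] False M_def by simp
      ultimately show ?thesis using False c1 M
        by (auto simp: PB_def field_simps)
    qed
    finally show ?thesis .
  qed
qed




lemma integral_bind_bdd:
  fixes f :: "'b \<Rightarrow> real"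
  assumes M: "prob_space M" and N[measurable]: "N \<in> measurable M (subprob_algebra B)"
    and f[measurable]: "f \<in> borel_measurable B" and f0: "\<And>y. 0 \<le> f y" and fB: "\<And>y. f y \<le> c"
  shows "(\<integral>x. f x \<partial>(M \<bind> N)) = (\<integral>x. (\<integral>y. f y \<partial>N x) \<partial>M)"
proof -
  interpret M: prob_space M by fact
  have sp: "space M \<noteq> {}" by (simp add: M.not_empty)
  interpret MN: subprob_space "M \<bind> N"
    by (rule subprob_space_bind[OF _ N]) unfold_locales
  have sMN: "sets (M \<bind> N) = sets B" using sets_bind[OF sets_kernel[OF N] sp] .
  have fMN[measurable]: "f \<in> borel_measurable (M \<bind> N)" by (subst measurable_cong_sets[OF sMN refl]) (rule f)
  have c0: "0 \<le> c" using f0 fB order_trans by blast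
  have int1: "integrable (M \<bind> N) f"
    by (intro MN.integrable_const_bound[where B=c]) (auto simp: f0 fB)
  have inner: "(\<integral>\<^sup>+y. ennreal (f y) \<partial>N x) = ennreal (\<integral>y. f y \<partial>N x)" if x: "x \<in> space M" for x
  proof -
    interpret Nx: subprob_space "N x" using subprob_space_kernel[OF N x] .
    have [measurable]: "f \<in> borel_measurable (N x)"
      by (subst measurable_cong_sets[OF sets_kernel[OF N x] refl]) (rule f)
    show ?thesis
      by (intro nn_integral_eq_integral Nx.integrable_const_bound[where B=c]) (auto simp: f0 fB)
  qed
  have gm[measurable]: "(\<lambda>x. \<integral>y. f y \<partial>N x) \<in> borel_measurable M"
    by (rule measurable_compose[OF N integral_measurable_subprob_algebra[OF f]])
  have gb: "\<And>x. x \<in> space M \<Longrightarrow> 0 \<le> (\<integral>y. f y \<partial>N x) \<and> (\<integral>y. f y \<partial>N x) \<le> c"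
  proof
    fix x assume x: "x \<in> space M"
    interpret Nx: subprob_space "N x" using subprob_space_kernel[OF N x] .
    have [measurable]: "f \<in> borel_measurable (N x)"
      by (subst measurable_cong_sets[OF sets_kernel[OF N x] refl]) (rule f)
    show "0 \<le> (\<integral>y. f y \<partial>N x)" by (intro integral_nonneg_AE) (simp add: f0)
    have "(\<integral>y. f y \<partial>N x) \<le> (\<integral>y. c \<partial>N x)"
      by (intro integral_mono Nx.integrable_const_bound[where B=c]) (auto simp: f0 fB c0)
    also have "\<dots> = c * measure (N x) (space (N x))" by simp
    also have "\<dots> \<le> c * 1" using c0 Nx.subprob_measure_le_1 by (intro mult_left_mono) auto
    finally show "(\<integral>y. f y \<partial>N x) \<le> c" by simp
  qed
  have int2: "integrable M (\<lambda>x. \<integral>y. f y \<partial>N x)"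
    by (intro M.integrable_const_bound[where B=c]) (use gb in auto)
  have "ennreal (\<integral>x. f x \<partial>(M \<bind> N)) = (\<integral>\<^sup>+x. ennreal (f x) \<partial>(M \<bind> N))"
    by (rule nn_integral_eq_integral[symmetric, OF int1]) (simp add: f0)
  also have "\<dots> = (\<integral>\<^sup>+x. (\<integral>\<^sup>+y. ennreal (f y) \<partial>N x) \<partial>M)"
    by (rule nn_integral_bind[OF _ N]) simp
  also have "\<dots> = (\<integral>\<^sup>+x. ennreal (\<integral>y. f y \<partial>N x) \<partial>M)"
    by (intro nn_integral_cong) (simp add: inner)
  also have "\<dots> = ennreal (\<integral>x. (\<integral>y. f y \<partial>N x) \<partial>M)"
    by (rule nn_integral_eq_integral[OF int2]) (use gb in auto)
  finally show ?thesis
    by (subst (asm) ennreal_inj) (auto intro!: integral_nonneg_AE simp: f0 gb)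
qed

lemma kM_meas[measurable]: "(\<lambda>p. kM (fst p) (snd p)) \<in> borel_measurable (borel \<Otimes>\<^sub>M borel)"
  unfolding kM_def by measurable
lemma kp_meas[measurable]: "(\<lambda>p. kp \<alpha> (fst p) (snd p)) \<in> borel_measurable (borel \<Otimes>\<^sub>M borel)"
  unfolding kp_def kM_def by measurable

lemma pair_kernel_meas:
  assumes a: "\<alpha> > 0"
  shows "(\<lambda>p. kendall_pair \<alpha> (fst p) (snd p)) \<in> measurable (borel \<Otimes>\<^sub>M borel) (subprob_algebra borel)"
proof (rule measurable_subprob_algebra)
  fix p show "subprob_space (kendall_pair \<alpha> (fst p) (snd p))"
    using prob_space_pair[OF a] by (simp add: prob_space_imp_subprob_space)
  show "sets (kendall_pair \<alpha> (fst p) (snd p)) = sets borel" by simp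
next
  fix A :: "real set" assume A[measurable]: "A \<in> sets borel"
  have eq: "emeasure (kendall_pair \<alpha> (fst p) (snd p)) A =
      (\<integral>\<^sup>+z. indicator A (kM (fst p) (snd p) * z) \<partial>sym_pareto \<alpha>) * ennreal (kp \<alpha> (fst p) (snd p))
    + ennreal (1/2) * (indicator A (kM (fst p) (snd p)) + indicator A (- kM (fst p) (snd p))) * ennreal (1 - kp \<alpha> (fst p) (snd p))" for p
    using pair_nn[OF a, of "indicator A" "fst p" "snd p"] A
    by (simp add: nn_integral_indicator[symmetric] del: nn_integral_indicator)
  have sp: "sym_pareto \<alpha> \<in> space (subprob_algebra borel)"
    using prob_space_pareto[OF a] by (simp add: space_subprob_algebra prob_space_imp_subprob_space)
  have m1: "(\<lambda>p. \<integral>\<^sup>+z. indicator A (kM (fst p) (snd p) * z) \<partial>sym_pareto \<alpha>) \<in> borel_measurable (borel \<Otimes>\<^sub>M borel)"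
    by (rule nn_integral_measurable_subprob_algebra2[where N=borel]) (auto intro: measurable_const[OF sp])
  show "(\<lambda>p. emeasure (kendall_pair \<alpha> (fst p) (snd p)) A) \<in> borel_measurable (borel \<Otimes>\<^sub>M borel)"
    unfolding eq using m1 by measurable
qed


lemma int_bdd:
  fixes f :: "'a \<Rightarrow> real"
  assumes "prob_space M" "f \<in> borel_measurable M" "\<And>x. \<bar>f x\<bar> \<le> c"
  shows "integrable M f"
proof -
  interpret prob_space M by fact
  show ?thesis using assms by (intro integrable_const_bound[where B=c]) auto
qed

lemma real_from_nn:
  fixes f :: "'a \<Rightarrow> real"
  assumes M: "prob_space M" and f: "f \<in> borel_measurable M" and f0: "\<And>x. 0 \<le> f x" and fc: "\<And>x. f x \<le> c"
    and eq: "(\<integral>\<^sup>+z. ennreal (f z) \<partial>M) = ennreal r" and r: "0 \<le> r"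
  shows "(\<integral>z. f z \<partial>M) = r"
proof -
  have "integrable M f" using int_bdd[OF M f, of c] f0 fc by (simp add: abs_le_iff)
  then have "(\<integral>\<^sup>+z. ennreal (f z) \<partial>M) = ennreal (\<integral>z. f z \<partial>M)"
    by (rule nn_integral_eq_integral) (simp add: f0)
  then show ?thesis using eq r by (simp add: integral_nonneg_AE f0)
qed

lemma It_le1: "It t z \<le> 1" by (simp add: It_eq)
lemma Itphi_le1: "0 < t \<Longrightarrow> 0 < \<alpha> \<Longrightarrow> It t z * phi \<alpha> t z \<le> 1"
  unfolding It_eq phi_def by (auto intro!: powr_le1)
lemma ind_le1: "indicator A z \<le> (1::real)" by (simp add: indicator_def)

lemma R1:
  assumes a: "\<alpha> > 0" and t: "t > 0"
  shows "(\<integral>z. It t z \<partial>kendall_pair \<alpha> x y) = It t x * It t y * (1 - phi \<alpha> t x * phi \<alpha> t y)"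
proof (rule real_from_nn[OF prob_space_pair[OF a] _ It_nonneg It_le1 V1[OF a t]])
  show "It t \<in> borel_measurable (kendall_pair \<alpha> x y)" by simp
  have "phi \<alpha> t x * phi \<alpha> t y \<le> 1" if "It t x = 1" "It t y = 1"
    using that t a unfolding It_eq phi_def by (auto intro!: mult_le_one powr_le1 split: if_splits)
  then show "0 \<le> It t x * It t y * (1 - phi \<alpha> t x * phi \<alpha> t y)"
    by (auto simp: It_eq)
qed

lemma R2:
  assumes a: "\<alpha> > 0" and t: "t > 0"
  shows "(\<integral>z. It t z * phi \<alpha> t z \<partial>kendall_pair \<alpha> x y) = It t x * It t y * (phi \<alpha> t x + phi \<alpha> t y - 2 * phi \<alpha> t x * phi \<alpha> t y)"
proof (rule real_from_nn[OF prob_space_pair[OF a] _ _ Itphi_le1[OF t a] V2[OF a t]])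
  show "(\<lambda>z. It t z * phi \<alpha> t z) \<in> borel_measurable (kendall_pair \<alpha> x y)" by simp
  show "0 \<le> It t z * phi \<alpha> t z" for z by (simp add: It_nonneg phi_nonneg)
  have "phi \<alpha> t x + phi \<alpha> t y - 2 * phi \<alpha> t x * phi \<alpha> t y \<ge> 0" if "It t x = 1" "It t y = 1"
  proof -
    have "phi \<alpha> t x \<le> 1" "phi \<alpha> t y \<le> 1" "0 \<le> phi \<alpha> t x" "0 \<le> phi \<alpha> t y"
      using that t a unfolding It_eq phi_def by (auto intro!: powr_le1 split: if_splits)
    then have "phi \<alpha> t x * phi \<alpha> t y \<le> phi \<alpha> t x" "phi \<alpha> t x * phi \<alpha> t y \<le> phi \<alpha> t y"
      by (auto intro: mult_left_le mult_left_le_one_le)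
    then show ?thesis by linarith
  qed
  then show "0 \<le> It t x * It t y * (phi \<alpha> t x + phi \<alpha> t y - 2 * phi \<alpha> t x * phi \<alpha> t y)"
    by (auto simp: It_eq)
qed

lemma R3:
  assumes a: "\<alpha> > 0" and t: "t > 0"
  shows "(\<integral>z. indicator {..t} z \<partial>kendall_pair \<alpha> x y) = (1 + It t x * It t y * (1 - phi \<alpha> t x * phi \<alpha> t y)) / 2"
proof (rule real_from_nn[OF prob_space_pair[OF a] _ _ ind_le1 V3[OF a t]])
  show "(indicator {..t} :: real \<Rightarrow> real) \<in> borel_measurable (kendall_pair \<alpha> x y)" by simp
  show "0 \<le> (indicator {..t} z :: real)" for z by simp
  have "phi \<alpha> t x * phi \<alpha> t y \<le> 1" if "It t x = 1" "It t y = 1"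
    using that t a unfolding It_eq phi_def by (auto intro!: mult_le_one powr_le1 split: if_splits)
  then show "0 \<le> (1 + It t x * It t y * (1 - phi \<alpha> t x * phi \<alpha> t y)) / 2"
    by (auto simp: It_eq)
qed




locale KW =
  fixes \<alpha> t :: real and \<nu> :: "real measure"
  assumes a: "\<alpha> > 0" and t: "t > 0" and nu: "prob_space \<nu>" and snu: "sets \<nu> = sets borel"
begin

lemma snu_meas[measurable_cong]: "sets \<nu> = sets borel" by (rule snu)

lemma nu_space: "\<nu> \<in> space (subprob_algebra borel)"
  using nu snu by (simp add: space_subprob_algebra prob_space_imp_subprob_space)

lemma pair_y_meas: "(\<lambda>y. kendall_pair \<alpha> x y) \<in> measurable \<nu> (subprob_algebra borel)"
proof -
  have "(\<lambda>y. (x, y)) \<in> measurable borel (borel \<Otimes>\<^sub>M borel)" by simp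
  from measurable_compose[OF this pair_kernel_meas[OF a]]
  have "(\<lambda>y. kendall_pair \<alpha> (fst (x, y)) (snd (x, y))) \<in> measurable borel (subprob_algebra borel)" .
  then show ?thesis by (subst measurable_cong_sets[OF snu refl]) simp
qed

lemma K_meas: "(\<lambda>x. kendall_kernel \<alpha> \<nu> x) \<in> measurable borel (subprob_algebra borel)"
  unfolding kendall_kernel_def
proof (rule measurable_bind'[where N=borel])
  show "(\<lambda>x. \<nu>) \<in> measurable borel (subprob_algebra borel)" using nu_space by simp
  show "(\<lambda>(x, y). kendall_pair \<alpha> x y) \<in> measurable (borel \<Otimes>\<^sub>M borel) (subprob_algebra borel)"
    using pair_kernel_meas[OF a] by (simp add: split_beta')
qed

lemma K_prob: "prob_space (kendall_kernel \<alpha> \<nu> x)"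
  unfolding kendall_kernel_def
  by (rule prob_space.prob_space_bind[OF nu _ pair_y_meas]) (simp add: prob_space_pair[OF a])

lemma K_sets[simp, measurable_cong]: "sets (kendall_kernel \<alpha> \<nu> x) = sets borel"
  using measurable_space[OF K_meas, of x] by (simp add: space_subprob_algebra)

lemma K_int:
  fixes f :: "real \<Rightarrow> real"
  assumes f[measurable]: "f \<in> borel_measurable borel" and f0: "\<And>y. 0 \<le> f y" and fc: "\<And>y. f y \<le> c"
  shows "(\<integral>z. f z \<partial>kendall_kernel \<alpha> \<nu> x) = (\<integral>y. (\<integral>z. f z \<partial>kendall_pair \<alpha> x y) \<partial>\<nu>)"
  unfolding kendall_kernel_def
  by (rule integral_bind_bdd[OF nu pair_y_meas f f0 fc])

definition "sv = (\<integral>y. It t y \<partial>\<nu>)"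
definition "Hv = (\<integral>y. It t y * phi \<alpha> t y \<partial>\<nu>)"

lemma intI1: "integrable \<nu> (It t)"
  using int_bdd[OF nu, of "It t" 1] It_nonneg It_le1 by (simp add: abs_le_iff)
lemma intI2: "integrable \<nu> (\<lambda>y. It t y * phi \<alpha> t y)"
  using int_bdd[OF nu, of "\<lambda>y. It t y * phi \<alpha> t y" 1] Itphi_le1[OF t a]
  by (simp add: abs_le_iff It_nonneg phi_nonneg)

lemma K1: "(\<integral>z. It t z \<partial>kendall_kernel \<alpha> \<nu> x) = It t x * sv - It t x * phi \<alpha> t x * Hv"
proof -
  have "(\<integral>z. It t z \<partial>kendall_kernel \<alpha> \<nu> x) = (\<integral>y. It t x * It t y * (1 - phi \<alpha> t x * phi \<alpha> t y) \<partial>\<nu>)"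
    by (subst K_int[of _ 1]) (auto simp: It_nonneg It_le1 R1[OF a t])
  also have "\<dots> = (\<integral>y. It t x * It t y - (It t x * phi \<alpha> t x) * (It t y * phi \<alpha> t y) \<partial>\<nu>)"
    by (intro Bochner_Integration.integral_cong) (auto simp: algebra_simps)
  also have "\<dots> = It t x * sv - It t x * phi \<alpha> t x * Hv"
    using intI1 intI2 unfolding sv_def Hv_def by simp
  finally show ?thesis .
qed

lemma K2: "(\<integral>z. It t z * phi \<alpha> t z \<partial>kendall_kernel \<alpha> \<nu> x) = It t x * phi \<alpha> t x * sv + It t x * Hv - 2 * (It t x * phi \<alpha> t x) * Hv"
proof -
  have "(\<integral>z. It t z * phi \<alpha> t z \<partial>kendall_kernel \<alpha> \<nu> x) = (\<integral>y. It t x * It t y * (phi \<alpha> t x + phi \<alpha> t y - 2 * phi \<alpha> t x * phi \<alpha> t y) \<partial>\<nu>)"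
    by (subst K_int[of _ 1]) (auto simp: It_nonneg phi_nonneg Itphi_le1[OF t a] R2[OF a t])
  also have "\<dots> = (\<integral>y. (It t x * phi \<alpha> t x) * It t y + It t x * (It t y * phi \<alpha> t y) - (2 * (It t x * phi \<alpha> t x)) * (It t y * phi \<alpha> t y) \<partial>\<nu>)"
    by (intro Bochner_Integration.integral_cong) (auto simp: algebra_simps)
  also have "\<dots> = It t x * phi \<alpha> t x * sv + It t x * Hv - 2 * (It t x * phi \<alpha> t x) * Hv"
    using intI1 intI2 unfolding sv_def Hv_def by simp
  finally show ?thesis .
qed

lemma K3: "(\<integral>z. indicator {..t} z \<partial>kendall_kernel \<alpha> \<nu> x) = (1 + (It t x * sv - It t x * phi \<alpha> t x * Hv)) / 2"
proof -
  have "(\<integral>z. indicator {..t} z \<partial>kendall_kernel \<alpha> \<nu> x) = (\<integral>y. (1 + It t x * It t y * (1 - phi \<alpha> t x * phi \<alpha> t y)) / 2 \<partial>\<nu>)"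
    by (subst K_int[of _ 1]) (auto simp: R3[OF a t] simp del: Bochner_Integration.integral_indicator)
  also have "\<dots> = (\<integral>y. 1/2 + ((It t x / 2) * It t y - (It t x * phi \<alpha> t x / 2) * (It t y * phi \<alpha> t y)) \<partial>\<nu>)"
    by (intro Bochner_Integration.integral_cong) (auto simp: field_simps)
  also have "\<dots> = (1 + (It t x * sv - It t x * phi \<alpha> t x * Hv)) / 2"
  proof -
    have i3: "integrable \<nu> (\<lambda>y. (It t x / 2) * It t y - (It t x * phi \<alpha> t x / 2) * (It t y * phi \<alpha> t y))"
      using intI1 intI2 by simp
    have "(\<integral>y. 1/2 + ((It t x / 2) * It t y - (It t x * phi \<alpha> t x / 2) * (It t y * phi \<alpha> t y)) \<partial>\<nu>)
      = (\<integral>y. 1/2 \<partial>\<nu>) + (\<integral>y. (It t x / 2) * It t y - (It t x * phi \<alpha> t x / 2) * (It t y * phi \<alpha> t y) \<partial>\<nu>)"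
      using i3 finite_measure.integrable_const[OF prob_space.finite_measure[OF nu]] by (intro Bochner_Integration.integral_add) auto
    also have "(\<integral>y. (It t x / 2) * It t y - (It t x * phi \<alpha> t x / 2) * (It t y * phi \<alpha> t y) \<partial>\<nu>)
       = (It t x / 2) * sv - (It t x * phi \<alpha> t x / 2) * Hv"
      using intI1 intI2 unfolding sv_def Hv_def by simp
    also have "(\<integral>y. (1/2::real) \<partial>\<nu>) = 1/2" using prob_space.prob_space[OF nu] by simp
    finally show ?thesis by (simp add: field_simps)
  qed
  finally show ?thesis .
qed

end



context KW begin

abbreviation "mu n \<equiv> kendall_walk_max \<alpha> \<nu> n"
definition "kap = (\<lambda>(x, m). distr (kendall_kernel \<alpha> \<nu> x) borel (\<lambda>y. (y, max m y)))"

lemma kap_meas: "kap \<in> measurable (borel :: (real \<times> real) measure) (subprob_algebra borel)"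
proof -
  have "(\<lambda>w. distr (kendall_kernel \<alpha> \<nu> (fst w)) (borel \<Otimes>\<^sub>M borel) (\<lambda>y. (y, max (snd w) y)))
      \<in> measurable (borel \<Otimes>\<^sub>M borel) (subprob_algebra (borel \<Otimes>\<^sub>M borel))"
  proof (rule measurable_distr2[where M=borel])
    show "(\<lambda>(w, y). (y, max (snd w) (y::real))) \<in> measurable ((borel \<Otimes>\<^sub>M borel) \<Otimes>\<^sub>M borel) (borel \<Otimes>\<^sub>M (borel :: real measure))"
      by measurable
    show "(\<lambda>w. kendall_kernel \<alpha> \<nu> (fst w)) \<in> measurable (borel \<Otimes>\<^sub>M (borel :: real measure)) (subprob_algebra borel)"
      by (rule measurable_compose[OF measurable_fst K_meas])
  qed
  then show ?thesis unfolding kap_def borel_prod split_beta' .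
qed

lemma kap_prob: "prob_space (kap w)"
  unfolding kap_def by (simp add: split_beta' prob_space.prob_space_distr[OF K_prob])

lemma mu_facts: "prob_space (mu n) \<and> sets (mu n) = sets (borel :: (real \<times> real) measure)"
proof (induction n)
  case 0
  then show ?case by (simp add: prob_space_return)
next
  case (Suc n)
  then have p: "prob_space (mu n)" and s: "sets (mu n) = sets borel" by auto
  have km: "kap \<in> measurable (mu n) (subprob_algebra borel)"
    using kap_meas by (subst measurable_cong_sets[OF s refl])
  have eq: "mu (Suc n) = mu n \<bind> kap" by (simp add: kap_def)
  have "prob_space (mu n \<bind> kap)"
    by (rule prob_space.prob_space_bind[OF p _ km]) (simp add: kap_prob)
  moreover have "sets (mu n \<bind> kap) = sets borel"
    using sets_bind[OF sets_kernel[OF km] prob_space.not_empty[OF p]] .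
  ultimately show ?case unfolding eq by blast
qed

lemma mu_prob: "prob_space (mu n)" using mu_facts by blast
lemma mu_sets[measurable_cong]: "sets (mu n) = sets (borel :: (real \<times> real) measure)" using mu_facts by blast

definition "Sm = {p :: real \<times> real. snd p \<le> t}"

lemma ind_Sm: "indicator Sm p = (indicator {..t} (snd p) :: real)"
  by (simp add: Sm_def indicator_def)

lemma mu_step:
  fixes F :: "real \<Rightarrow> real"
  assumes F[measurable]: "F \<in> borel_measurable borel" and F0: "\<And>y. 0 \<le> F y" and Fc: "\<And>y. F y \<le> c"
  shows "(\<integral>p. indicator Sm p * F (fst p) \<partial>mu (Suc n))
     = (\<integral>p. indicator Sm p * (\<integral>y. indicator {..t} y * F y \<partial>kendall_kernel \<alpha> \<nu> (fst p)) \<partial>mu n)"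
proof -
  have c0: "0 \<le> c" using F0[of 0] Fc[of 0] by linarith
  have km: "kap \<in> measurable (mu n) (subprob_algebra borel)"
    using kap_meas by (subst measurable_cong_sets[OF mu_sets refl])
  have eq: "mu (Suc n) = mu n \<bind> kap" by (simp add: kap_def)
  have fm: "(\<lambda>p. indicator Sm p * F (fst p)) \<in> borel_measurable (borel :: (real \<times> real) measure)"
    unfolding ind_Sm borel_prod[symmetric] by measurable
  have "(\<integral>p. indicator Sm p * F (fst p) \<partial>mu (Suc n)) = (\<integral>w. (\<integral>p. indicator Sm p * F (fst p) \<partial>kap w) \<partial>mu n)"
    unfolding eq
    by (rule integral_bind_bdd[OF mu_prob km fm, where c=c])
       (use F0 Fc c0 in \<open>auto simp: indicator_def\<close>)
  also have "\<dots> = (\<integral>p. indicator Sm p * (\<integral>y. indicator {..t} y * F y \<partial>kendall_kernel \<alpha> \<nu> (fst p)) \<partial>mu n)"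
  proof (intro Bochner_Integration.integral_cong refl)
    fix w :: "real \<times> real"
    have "(\<integral>p. indicator Sm p * F (fst p) \<partial>kap w)
        = (\<integral>y. indicator Sm (y, max (snd w) y) * F y \<partial>kendall_kernel \<alpha> \<nu> (fst w))"
      unfolding kap_def split_beta'
      by (subst integral_distr) (use fm in auto)
    also have "\<dots> = (\<integral>y. indicator Sm w * (indicator {..t} y * F y) \<partial>kendall_kernel \<alpha> \<nu> (fst w))"
      by (intro Bochner_Integration.integral_cong) (auto simp: Sm_def indicator_def)
    also have "\<dots> = indicator Sm w * (\<integral>y. indicator {..t} y * F y \<partial>kendall_kernel \<alpha> \<nu> (fst w))"
      by simp
    finally show "(\<integral>p. indicator Sm p * F (fst p) \<partial>kap w)
      = indicator Sm w * (\<integral>y. indicator {..t} y * F y \<partial>kendall_kernel \<alpha> \<nu> (fst w))" .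
  qed
  finally show ?thesis .
qed


definition "Pf n = (\<integral>p. (indicator Sm p :: real) \<partial>mu n)"
definition "Qf n = (\<integral>p. indicator Sm p * It t (fst p) \<partial>mu n)"
definition "Wf n = (\<integral>p. indicator Sm p * (It t (fst p) * phi \<alpha> t (fst p)) \<partial>mu n)"

lemma ind_Sm_meas[measurable]: "(\<lambda>p. indicator Sm p :: real) \<in> borel_measurable (borel :: (real \<times> real) measure)"
  unfolding ind_Sm borel_prod[symmetric] by measurable
lemma fst_meas_b[measurable]: "(\<lambda>p. F (fst p) :: real) \<in> borel_measurable (borel :: (real \<times> real) measure)"
  if [measurable]: "F \<in> borel_measurable borel"
  unfolding borel_prod[symmetric] by measurable

lemma mu_meas: "f \<in> borel_measurable (borel :: (real \<times> real) measure) \<Longrightarrow> f \<in> borel_measurable (mu n)"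
  by (subst measurable_cong_sets[OF mu_sets refl])

lemma int_i0: "integrable (mu n) (\<lambda>p. indicator Sm p :: real)"
proof (rule int_bdd[OF mu_prob])
  show "(\<lambda>p. indicator Sm p :: real) \<in> borel_measurable (mu n)" by (rule mu_meas) simp
  show "\<bar>indicator Sm p :: real\<bar> \<le> 1" for p by (simp add: indicator_def)
qed
lemma int_i1: "integrable (mu n) (\<lambda>p. indicator Sm p * It t (fst p))"
proof (rule int_bdd[OF mu_prob])
  show "(\<lambda>p. indicator Sm p * It t (fst p)) \<in> borel_measurable (mu n)" by (rule mu_meas) simp
  show "\<bar>indicator Sm p * It t (fst p)\<bar> \<le> 1" for p by (simp add: indicator_def It_eq)
qed
lemma int_i2: "integrable (mu n) (\<lambda>p. indicator Sm p * (It t (fst p) * phi \<alpha> t (fst p)))"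
proof (rule int_bdd[OF mu_prob])
  show "(\<lambda>p. indicator Sm p * (It t (fst p) * phi \<alpha> t (fst p))) \<in> borel_measurable (mu n)" by (rule mu_meas) simp
  show "\<bar>indicator Sm p * (It t (fst p) * phi \<alpha> t (fst p))\<bar> \<le> 1" for p
    using Itphi_le1[OF t a, of "fst p"] It_nonneg[of t "fst p"] phi_nonneg[of \<alpha> t "fst p"]
    by (simp add: indicator_def abs_mult)
qed

lemma lin:
  "(\<integral>p. indicator Sm p * (u + v * It t (fst p) + w * (It t (fst p) * phi \<alpha> t (fst p))) \<partial>mu n)
     = u * Pf n + v * Qf n + w * Wf n"
proof -
  have "(\<integral>p. indicator Sm p * (u + v * It t (fst p) + w * (It t (fst p) * phi \<alpha> t (fst p))) \<partial>mu n)
    = (\<integral>p. u * indicator Sm p + v * (indicator Sm p * It t (fst p)) + w * (indicator Sm p * (It t (fst p) * phi \<alpha> t (fst p))) \<partial>mu n)"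
    by (intro Bochner_Integration.integral_cong) (auto simp: algebra_simps)
  also have "\<dots> = u * Pf n + v * Qf n + w * Wf n"
    using int_i0 int_i1 int_i2 unfolding Pf_def Qf_def Wf_def by simp
  finally show ?thesis .
qed

lemma It_le_t: "indicator {..t} y * It t y = It t y"
  by (auto simp: It_eq indicator_def)

lemma Q_rec: "Qf (Suc n) = sv * Qf n - Hv * Wf n"
proof -
  have "Qf (Suc n) = (\<integral>p. indicator Sm p * (\<integral>y. indicator {..t} y * It t y \<partial>kendall_kernel \<alpha> \<nu> (fst p)) \<partial>mu n)"
    unfolding Qf_def by (rule mu_step[of _ 1]) (auto simp: It_nonneg It_le1)
  also have "\<dots> = (\<integral>p. indicator Sm p * (0 + sv * It t (fst p) + (- Hv) * (It t (fst p) * phi \<alpha> t (fst p))) \<partial>mu n)"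
  proof (intro Bochner_Integration.integral_cong refl)
    fix p :: "real \<times> real"
    have "(\<integral>y. indicator {..t} y * It t y \<partial>kendall_kernel \<alpha> \<nu> (fst p)) = (\<integral>y. It t y \<partial>kendall_kernel \<alpha> \<nu> (fst p))"
      by (rule Bochner_Integration.integral_cong[OF refl]) (rule It_le_t)
    note eK = this
    show "indicator Sm p * (\<integral>y. indicator {..t} y * It t y \<partial>kendall_kernel \<alpha> \<nu> (fst p)) =
      indicator Sm p * (0 + sv * It t (fst p) + - Hv * (It t (fst p) * phi \<alpha> t (fst p)))"
      unfolding eK K1 by (simp add: algebra_simps)
  qed
  also have "\<dots> = sv * Qf n - Hv * Wf n" unfolding lin by simp
  finally show ?thesis .
qed

lemma W_rec: "Wf (Suc n) = sv * Wf n + Hv * Qf n - 2 * Hv * Wf n"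
proof -
  have "Wf (Suc n) = (\<integral>p. indicator Sm p * (\<integral>y. indicator {..t} y * (It t y * phi \<alpha> t y) \<partial>kendall_kernel \<alpha> \<nu> (fst p)) \<partial>mu n)"
    unfolding Wf_def by (rule mu_step[of _ 1]) (auto simp: It_nonneg phi_nonneg Itphi_le1[OF t a])
  also have "\<dots> = (\<integral>p. indicator Sm p * (0 + Hv * It t (fst p) + (sv - 2 * Hv) * (It t (fst p) * phi \<alpha> t (fst p))) \<partial>mu n)"
  proof (intro Bochner_Integration.integral_cong refl)
    fix p :: "real \<times> real"
    have "(\<integral>y. indicator {..t} y * (It t y * phi \<alpha> t y) \<partial>kendall_kernel \<alpha> \<nu> (fst p)) = (\<integral>y. It t y * phi \<alpha> t y \<partial>kendall_kernel \<alpha> \<nu> (fst p))"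
      by (rule Bochner_Integration.integral_cong[OF refl]) (simp add: mult.assoc[symmetric] It_le_t)
    note eK = this
    show "indicator Sm p * (\<integral>y. indicator {..t} y * (It t y * phi \<alpha> t y) \<partial>kendall_kernel \<alpha> \<nu> (fst p)) =
      indicator Sm p * (0 + Hv * It t (fst p) + (sv - 2 * Hv) * (It t (fst p) * phi \<alpha> t (fst p)))"
      unfolding eK K2 by (simp add: algebra_simps)
  qed
  also have "\<dots> = sv * Wf n + Hv * Qf n - 2 * Hv * Wf n" unfolding lin by (simp add: algebra_simps)
  finally show ?thesis .
qed

lemma P_rec: "Pf (Suc n) = Pf n / 2 + (sv * Qf n - Hv * Wf n) / 2"
proof -
  have e: "(\<lambda>p. indicator Sm p * (\<lambda>_. 1::real) (fst p)) = (\<lambda>p. indicator Sm p)" by (rule ext) simp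
  have "Pf (Suc n) = (\<integral>p. indicator Sm p * (\<lambda>_. 1::real) (fst p) \<partial>mu (Suc n))"
    unfolding Pf_def e ..
  also have "\<dots> = (\<integral>p. indicator Sm p * (\<integral>y. indicator {..t} y * (\<lambda>_. 1) y \<partial>kendall_kernel \<alpha> \<nu> (fst p)) \<partial>mu n)"
    by (rule mu_step[of _ 1]) auto
  also have "\<dots> = (\<integral>p. indicator Sm p * (1/2 + (sv/2) * It t (fst p) + (- Hv/2) * (It t (fst p) * phi \<alpha> t (fst p))) \<partial>mu n)"
    by (intro Bochner_Integration.integral_cong) (auto simp: K3 simp del: Bochner_Integration.integral_indicator)
  also have "\<dots> = Pf n / 2 + (sv * Qf n - Hv * Wf n) / 2" unfolding lin by (simp add: field_simps)
  finally show ?thesis .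
qed

lemma init: "Pf 0 = 1" "Qf 0 = 1" "Wf 0 = 0"
proof -
  have sp: "(0::real, 0::real) \<in> space borel" by simp
  show "Pf 0 = 1" unfolding Pf_def kendall_walk_max.simps
    by (subst integral_return[OF sp]) (use t in \<open>simp_all add: ind_Sm\<close>)
  show "Qf 0 = 1" unfolding Qf_def kendall_walk_max.simps
    apply (subst integral_return[OF sp])
     apply simp
    apply (use t in \<open>simp add: ind_Sm It_eq\<close>)
    done
  show "Wf 0 = 0" unfolding Wf_def kendall_walk_max.simps
    apply (subst integral_return[OF sp])
     apply simp
    apply (use t a in \<open>simp add: ind_Sm It_eq phi0\<close>)
    done
qed

lemma Pf_measure: "Pf n = measure (mu n) {p. snd p \<le> t}"
  unfolding Pf_def Sm_def using mu_sets[of n] sets_eq_imp_space_eq[OF mu_sets[of n]] by simp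

end



definition "Ff G H n = (let A = 1 + H / (2*G - 1)^2 - G / (2*G - 1);
             B = H / ((2*G - 1) * (1 - G));
             C = G / (2*G - 1) - H / (2*G - 1)^2 * (G / (1 - G))
         in A * (1/2)^n + B * (G / (1 - G)) * (1 - G)^2 * real n * G^(n-1)
              + (B + C) * (G / (1 - G)) * G^(n-1) * (1 - G))"

lemma Ff_simp:
  fixes G H :: real
  assumes D: "2*G - 1 \<noteq> 0" and G1: "1 - G \<noteq> 0" and n: "n \<ge> 1"
  shows "Ff G H n = (1 + H / (2*G - 1)^2 - G / (2*G - 1)) * (1/2)^n + H / (2*G-1) * real n * G^n
      + (G * (2*G-1) - H) / (2*G-1)^2 * G^n"
proof -
  obtain k where k: "n = Suc k" using n by (cases n) auto
  define D where "D = 2*G - 1"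
  have DD: "D \<noteq> 0" using D by (simp add: D_def)
  have p1: "H / (D * (1 - G)) * (G / (1 - G)) * (1 - G)^2 = H * G / D"
  proof -
    define E where "E = 1 - G"
    have "E \<noteq> 0" using G1 by (simp add: E_def)
    then have "H / (D * E) * (G / E) * E^2 = H * G / D" using DD by (simp add: field_simps power2_eq_square)
    then show ?thesis by (simp add: E_def)
  qed
  have p2: "H / (D * (1 - G)) + (G / D - H / D^2 * (G / (1 - G))) = (G * D - H) / D^2"
  proof -
    define E where "E = 1 - G"
    have "E \<noteq> 0" using G1 by (simp add: E_def)
    then have "H / (D * E) + (G / D - H / D^2 * (G / E)) = (H * D + G * D * E - H * G) / (D^2 * E)"
      using DD by (simp add: field_simps power2_eq_square)
    then have "H / (D * (1 - G)) + (G / D - H / D^2 * (G / (1 - G))) = (H * D + G * D * (1 - G) - H * G) / (D^2 * (1 - G))"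
      by (simp add: E_def)
    also have "H * D + G * D * (1 - G) - H * G = (G * D - H) * (1 - G)"
      by (simp add: D_def algebra_simps)
    also have "(G * D - H) * (1 - G) / (D^2 * (1 - G)) = (G * D - H) / D^2"
      using G1 by simp
    finally show ?thesis .
  qed
  have "Ff G H n = (1 + H / D^2 - G / D) * (1/2)^(Suc k) + (H / (D * (1 - G)) * (G / (1 - G)) * (1 - G)^2) * real (Suc k) * G^k
      + (H / (D * (1 - G)) + (G / D - H / D^2 * (G / (1 - G)))) * (G / (1 - G)) * G^k * (1 - G)"
    unfolding Ff_def Let_def D_def[symmetric] k by simp
  also have "\<dots> = (1 + H / D^2 - G / D) * (1/2)^(Suc k) + (H * G / D) * real (Suc k) * G^k
      + ((G * D - H) / D^2) * (G / (1 - G)) * G^k * (1 - G)"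
    unfolding p1 p2 ..
  also have "\<dots> = (1 + H / D^2 - G / D) * (1/2)^n + H / D * real n * G^n + (G * D - H) / D^2 * G^n"
  proof -
    have g: "x * (G / (1 - G)) * G^k * (1 - G) = x * G^n" for x using G1 by (simp add: k)
    show ?thesis unfolding g by (simp add: k)
  qed
  finally show ?thesis by (simp add: D_def)
qed

lemma Ff1:
  fixes G H :: real
  assumes D: "2*G - 1 \<noteq> 0" and G1: "1 - G \<noteq> 0"
  shows "Ff G H 1 = 1/2 + (G + H)/2"
proof -
  define D where "D = 2*G - 1"
  have DD: "D \<noteq> 0" using D by (simp add: D_def)
  have "Ff G H 1 = (1 + H / D^2 - G / D) * (1/2) + H / D * G + (G * D - H) / D^2 * G"
    using Ff_simp[OF D G1, of 1 H] by (simp add: D_def)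
  also have "\<dots> = 1/2 + (G + H)/2"
    using DD by (simp add: field_simps power2_eq_square) (simp add: D_def algebra_simps)
  finally show ?thesis .
qed

lemma Ff_step:
  fixes G H :: real
  assumes D: "2*G - 1 \<noteq> 0" and G1: "1 - G \<noteq> 0"
  shows "Ff G H (Suc (Suc m)) = Ff G H (Suc m) / 2 + (G^(Suc (Suc m)) + real (Suc (Suc m)) * H * G^(Suc m)) / 2"
proof -
  define D where "D = 2*G - 1"
  have DD: "D \<noteq> 0" using D by (simp add: D_def)
  define Y where "Y = G^(Suc m)"
  define A where "A = (1 + H / D^2 - G / D)"
  have L: "Ff G H (Suc (Suc m)) = A * (1/2)^(Suc (Suc m)) + (H / D * real (Suc (Suc m)) * (G * Y) + (G * D - H) / D^2 * (G * Y))"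
    using Ff_simp[OF D G1, of "Suc (Suc m)" H] by (simp add: D_def A_def Y_def)
  have R: "Ff G H (Suc m) = A * (1/2)^(Suc m) + (H / D * real (Suc m) * Y + (G * D - H) / D^2 * Y)"
    using Ff_simp[OF D G1, of "Suc m" H] by (simp add: D_def A_def Y_def)
  have key: "H / D * real (Suc (Suc m)) * (G * Y) + (G * D - H) / D^2 * (G * Y)
     = (H / D * real (Suc m) * Y + (G * D - H) / D^2 * Y) / 2 + (G * Y + real (Suc (Suc m)) * H * Y) / 2"
    using DD by (simp add: field_simps power2_eq_square) (simp add: D_def algebra_simps)
  have z: "G^(Suc (Suc m)) = G * Y" "G^(Suc m) = Y" by (simp_all add: Y_def)
  have h: "(1/2::real)^(Suc (Suc m)) = (1/2)^(Suc m) / 2" by simp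
  show ?thesis unfolding L R z h key by (simp add: field_simps)
qed




context KW begin

lemma Psi_eq: "Psi \<alpha> (x / t) = It t x - It t x * phi \<alpha> t x"
proof (cases "\<bar>x\<bar> \<le> t")
  case True
  have "\<bar>x / t\<bar> = \<bar>x\<bar> / t" using t by (simp add: abs_divide)
  moreover have "(\<bar>x\<bar> / t) powr \<alpha> \<le> 1" using True t a by (intro powr_le1) auto
  ultimately show ?thesis using True unfolding Psi_def It_eq phi_def by simp
next
  case False
  have "\<bar>x / t\<bar> = \<bar>x\<bar> / t" using t by (simp add: abs_divide)
  moreover have "1 < (\<bar>x\<bar> / t) powr \<alpha>" using False t a by (intro gr_one_powr) auto
  ultimately show ?thesis using False abs_of_pos[OF t] unfolding Psi_def It_eq phi_def by simp
qed

lemma funG_eq: "funG \<alpha> \<nu> t = sv - Hv"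
  unfolding funG_def Psi_eq sv_def Hv_def using intI1 intI2 by simp

lemma sv_measure: "sv = measure \<nu> {-t..t}"
  unfolding sv_def It_def using sets_eq_imp_space_eq[OF snu] by simp

end

locale KW2 = KW +
  assumes sym: "distr \<nu> borel uminus = \<nu>" and z0: "measure \<nu> {0} = 0"
begin

lemma space_nu: "space \<nu> = UNIV" using sets_eq_imp_space_eq[OF snu] by simp

lemma funH_eq: "funH \<alpha> \<nu> t = Hv"
proof -
  interpret P: prob_space \<nu> by (rule nu)
  have s[simp]: "A \<in> sets borel \<Longrightarrow> A \<in> sets \<nu>" for A using snu by simp
  have u: "{..t} = {..<-t} \<union> {-t..t}" using t by auto
  have F: "measure \<nu> {..t} = measure \<nu> {..<-t} + measure \<nu> {-t..t}"
    unfolding u by (rule P.finite_measure_Union) auto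
  have c: "measure \<nu> {t<..} = 1 - measure \<nu> {..t}"
  proof -
    have "measure \<nu> (space \<nu> - {..t}) = measure \<nu> (space \<nu>) - measure \<nu> {..t}"
      by (rule P.finite_measure_compl) simp
    moreover have "space \<nu> - {..t} = {t<..}" by (auto simp: space_nu)
    ultimately show ?thesis by (simp add: P.prob_space)
  qed
  have m: "measure \<nu> {t<..} = measure \<nu> {..<-t}"
  proof -
    have "measure \<nu> {t<..} = measure (distr \<nu> borel uminus) {t<..}" using sym by simp
    also have "\<dots> = measure \<nu> (uminus -` {t<..} \<inter> space \<nu>)"
      by (rule measure_distr) (auto simp: measurable_cong_sets[OF snu refl])
    also have "uminus -` {t<..} \<inter> space \<nu> = {..<-t}" by (auto simp: space_nu)
    finally show ?thesis .
  qed
  show ?thesis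
    unfolding funH_def cdfF_def funG_eq sv_measure using F c m by simp
qed

lemma G_lt1: "funG \<alpha> \<nu> t \<noteq> 1"
proof
  assume G1: "funG \<alpha> \<nu> t = 1"
  interpret P: prob_space \<nu> by (rule nu)
  define h where "h x = 1 - It t x + It t x * phi \<alpha> t x" for x
  have hm[measurable]: "h \<in> borel_measurable \<nu>" unfolding h_def by (subst measurable_cong_sets[OF snu refl]) simp
  have h0: "0 \<le> h x" for x unfolding h_def It_eq using phi_nonneg[of \<alpha> t x] by auto
  have hpos: "x \<noteq> 0 \<Longrightarrow> 0 < h x" for x
    unfolding h_def It_eq phi_def using t a by auto
  have hi: "integrable \<nu> h" unfolding h_def using intI1 intI2 by simp
  have "(\<integral>x. h x \<partial>\<nu>) = 1 - sv + Hv"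
    unfolding h_def sv_def Hv_def using intI1 intI2 P.prob_space by simp
  also have "\<dots> = 0" using G1 funG_eq by simp
  finally have "(\<integral>x. h x \<partial>\<nu>) = 0" .
  then have "AE x in \<nu>. h x = 0" using integral_nonneg_eq_0_iff_AE[OF hi] h0 by simp
  then have "AE x in \<nu>. x = 0" by eventually_elim (use hpos in force)
  moreover have ev: "{x \<in> space \<nu>. x = 0} \<in> P.events" by (simp add: space_nu snu)
  ultimately have "measure \<nu> {x \<in> space \<nu>. x = 0} = 1"
    using P.prob_Collect_eq_1[OF ev] by simp
  moreover have "{x \<in> space \<nu>. x = 0} = {0}" by (auto simp: space_nu)
  ultimately show False using z0 by simp
qed

end



context KW2 begin

lemma sv_GH: "sv = funG \<alpha> \<nu> t + funH \<alpha> \<nu> t" "Hv = funH \<alpha> \<nu> t"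
  using funG_eq funH_eq by simp_all

lemma closed:
  "Qf (Suc n) = (funG \<alpha> \<nu> t)^(Suc n) + real (Suc n) * funH \<alpha> \<nu> t * (funG \<alpha> \<nu> t)^n
   \<and> Wf (Suc n) = real (Suc n) * funH \<alpha> \<nu> t * (funG \<alpha> \<nu> t)^n"
proof (induction n)
  case 0
  show ?case using Q_rec[of 0] W_rec[of 0] init sv_GH by simp
next
  case (Suc n)
  define G where "G = funG \<alpha> \<nu> t"
  define H where "H = funH \<alpha> \<nu> t"
  have IH: "Qf (Suc n) = G^(Suc n) + real (Suc n) * H * G^n" "Wf (Suc n) = real (Suc n) * H * G^n"
    using Suc.IH by (simp_all add: G_def H_def)
  have s: "sv = G + H" "Hv = H" using sv_GH by (simp_all add: G_def H_def)
  define X where "X = G^n"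
  define r where "r = real (Suc n)"
  have e: "G^(Suc n) = G * X" "G^(Suc (Suc n)) = G * G * X" "real (Suc (Suc n)) = r + 1" "real (Suc n) = r"
    by (simp_all add: X_def r_def)
  have "Qf (Suc (Suc n)) = (G + H) * (G * X + r * H * X) - H * (r * H * X)"
    by (simp only: Q_rec[of "Suc n"] IH s e X_def[symmetric])
  also have "\<dots> = G * G * X + (r + 1) * H * (G * X)" by algebra
  finally have q: "Qf (Suc (Suc n)) = G^(Suc (Suc n)) + real (Suc (Suc n)) * H * G^(Suc n)"
    by (simp only: e)
  have "Wf (Suc (Suc n)) = (G + H) * (r * H * X) + H * (G * X + r * H * X) - 2 * H * (r * H * X)"
    by (simp only: W_rec[of "Suc n"] IH s e X_def[symmetric])
  also have "\<dots> = (r + 1) * H * (G * X)" by algebra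
  finally have w: "Wf (Suc (Suc n)) = real (Suc (Suc n)) * H * G^(Suc n)"
    by (simp only: e)
  show ?case using q w by (simp only: G_def H_def)
qed

lemma Pf_closed:
  assumes D: "2 * funG \<alpha> \<nu> t - 1 \<noteq> 0"
  shows "Pf (Suc m) = Ff (funG \<alpha> \<nu> t) (funH \<alpha> \<nu> t) (Suc m)"
proof (induction m)
  have G1: "1 - funG \<alpha> \<nu> t \<noteq> 0" using G_lt1 by simp
  case 0
  have "Pf (Suc 0) = Pf 0 / 2 + Qf (Suc 0) / 2" using P_rec[of 0] Q_rec[of 0] by simp
  also have "\<dots> = 1/2 + (funG \<alpha> \<nu> t + funH \<alpha> \<nu> t) / 2"
    using closed[of 0] init by simp
  also have "\<dots> = Ff (funG \<alpha> \<nu> t) (funH \<alpha> \<nu> t) (Suc 0)"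
    using Ff1[OF D G1] by simp
  finally show ?case .
next
  have G1: "1 - funG \<alpha> \<nu> t \<noteq> 0" using G_lt1 by simp
  case (Suc m)
  have "Pf (Suc (Suc m)) = Pf (Suc m) / 2 + Qf (Suc (Suc m)) / 2" using P_rec[of "Suc m"] Q_rec[of "Suc m"] by simp
  also have "\<dots> = Ff (funG \<alpha> \<nu> t) (funH \<alpha> \<nu> t) (Suc m) / 2 + ((funG \<alpha> \<nu> t)^(Suc (Suc m)) + real (Suc (Suc m)) * funH \<alpha> \<nu> t * (funG \<alpha> \<nu> t)^(Suc m)) / 2"
    unfolding Suc.IH using closed[of "Suc m"] by (simp only:)
  also have "\<dots> = Ff (funG \<alpha> \<nu> t) (funH \<alpha> \<nu> t) (Suc (Suc m))"
    by (rule Ff_step[OF D G1, symmetric])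
  finally show ?case .
qed

end

theorem lemma14:
  fixes \<alpha> t :: real and \<nu> :: "real measure" and n :: nat
  assumes "\<alpha> > 0"
    and "prob_space \<nu>" and "sets \<nu> = sets borel"
    and "distr \<nu> borel uminus = \<nu>"
    and "measure \<nu> {0} = 0"
    and "t > 0" and "measure \<nu> {t} = 0"
    and "funG \<alpha> \<nu> t \<noteq> 1/2"
    and "n \<ge> 1"
  shows "let G = funG \<alpha> \<nu> t; H = funH \<alpha> \<nu> t;
             A = 1 + H / (2*G - 1)^2 - G / (2*G - 1);
             B = H / ((2*G - 1) * (1 - G));
             C = G / (2*G - 1) - H / (2*G - 1)^2 * (G / (1 - G))
         in measure (kendall_walk_max \<alpha> \<nu> n) {p. snd p \<le> t}
            = A * (1/2)^n + B * (G / (1 - G)) * (1 - G)^2 * real n * G^(n-1)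
              + (B + C) * (G / (1 - G)) * G^(n-1) * (1 - G)"
proof -
  have k1: "KW \<alpha> t \<nu>" using assms(1,2,3,6) by (simp add: KW_def)
  have k2: "KW2_axioms \<nu>" using assms(4,5) by (simp add: KW2_axioms_def)
  interpret KW2 \<alpha> t \<nu> using k1 k2 by (rule KW2.intro)
  obtain m where m: "n = Suc m" using assms(9) by (cases n) auto
  have D: "2 * funG \<alpha> \<nu> t - 1 \<noteq> 0" using assms(8) by simp
  have "measure (kendall_walk_max \<alpha> \<nu> n) {p. snd p \<le> t} = Ff (funG \<alpha> \<nu> t) (funH \<alpha> \<nu> t) n"
    unfolding Pf_measure[symmetric] m by (rule Pf_closed[OF D])
  then show ?thesis unfolding Let_def Ff_def .
qed


end
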